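(* Consider the sparse linear Gaussian model: $S\in\{1,\dots,N\}$, $\mathcal{X}_S=\{\mathbf{x}\in\mathbb{R}^N:\|\mathbf{x}\|_0\le S\}$, $\mathbf{H}\in\mathbb{R}^{M\times N}$ with $\operatorname{spark}(\mathbf{H})>S$, $\sigma>0$, observation $\mathbf{y}=\mathbf{H}\mathbf{x}+\mathbf{n}$, $\mathbf{n}\sim\mathcal{N}(\mathbf{0},\sigma^2\mathbf{I})$, with parameter function $g(\mathbf{x})=x_k$ for a fixed $k\in[N]$. Let $c:\mathcal{X}_S\to\mathbb{R}$ be a bias function that is valid at every $\mathbf{x}_0\in\mathcal{X}_S$. If $c$ is continuous, then the minimum achievable variance $\mathbf{x}_0\mapsto M(c,\mathbf{x}_0)$ is a lower semi-continuous function on $\mathcal{X}_S$.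
   Context: An estimator $\hat g:\mathbb{R}^M\to\mathbb{R}$ has bias $b(\hat g;\mathbf{x})=\mathsf{E}_{\mathbf{x}}\{\hat g(\mathbf{y})\}-x_k$ and variance $v(\hat g;\mathbf{x})=\mathsf{E}_{\mathbf{x}}\{(\hat g(\mathbf{y})-\mathsf{E}_{\mathbf{x}}\hat g(\mathbf{y}))^2\}$. $c$ is valid at $\mathbf{x}_0$ if some estimator has $v(\hat g;\mathbf{x}_0)<\infty$ and $b(\hat g;\mathbf{x})=c(\mathbf{x})$ for all $\mathbf{x}\in\mathcal{X}_S$; $M(c,\mathbf{x}_0)$ is the infimum of $v(\hat g;\mathbf{x}_0)$ over all such estimators. $\|\cdot\|_0$ counts nonzero entries; $\operatorname{spark}$ = minimum number of linearly dependent columns. *)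

theory Defs
  imports "HOL-Probability.Probability" "HOL-Library.Extended_Nat"
begin

definition l0 :: "real^'n \<Rightarrow> nat" where
  "l0 x = card {i. x $ i \<noteq> 0}"

definition sparse_set :: "nat \<Rightarrow> (real^'n) set" where
  "sparse_set S = {x. l0 x \<le> S}"

definition cols_dependent :: "real^'n^'m \<Rightarrow> 'n set \<Rightarrow> bool" where
  "cols_dependent H C \<longleftrightarrow>
     (\<exists>a::'n \<Rightarrow> real. (\<exists>j\<in>C. a j \<noteq> 0) \<and> (\<Sum>j\<in>C. a j *\<^sub>R column j H) = 0)"

definition spark :: "real^'n^'m \<Rightarrow> enat" where
  "spark H = (INF C \<in> {C. cols_dependent H C}. enat (card C))"

definition gauss_dens :: "real \<Rightarrow> real^'n^'m \<Rightarrow> real^'n \<Rightarrow> real^'m \<Rightarrow> real" where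
  "gauss_dens \<sigma> H x y =
     (2 * pi * \<sigma>\<^sup>2) powr (- real CARD('m) / 2) * exp (- (norm (y - H *v x))\<^sup>2 / (2 * \<sigma>\<^sup>2))"

definition obs_meas :: "real \<Rightarrow> real^'n^'m \<Rightarrow> real^'n \<Rightarrow> (real^'m) measure" where
  "obs_meas \<sigma> H x = density lborel (\<lambda>y. ennreal (gauss_dens \<sigma> H x y))"

definition expect :: "real \<Rightarrow> real^'n^'m \<Rightarrow> real^'n \<Rightarrow> (real^'m \<Rightarrow> real) \<Rightarrow> real" where
  "expect \<sigma> H x g = integral\<^sup>L (obs_meas \<sigma> H x) g"

definition bias :: "real \<Rightarrow> real^'n^'m \<Rightarrow> 'n \<Rightarrow> (real^'m \<Rightarrow> real) \<Rightarrow> real^'n \<Rightarrow> real" where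
  "bias \<sigma> H k g x = expect \<sigma> H x g - x $ k"

definition var :: "real \<Rightarrow> real^'n^'m \<Rightarrow> (real^'m \<Rightarrow> real) \<Rightarrow> real^'n \<Rightarrow> real" where
  "var \<sigma> H g x = expect \<sigma> H x (\<lambda>y. (g y - expect \<sigma> H x g)\<^sup>2)"

definition admissible ::
  "real \<Rightarrow> real^'n^'m \<Rightarrow> nat \<Rightarrow> 'n \<Rightarrow> (real^'n \<Rightarrow> real) \<Rightarrow> real^'n \<Rightarrow> (real^'m \<Rightarrow> real) \<Rightarrow> bool" where
  "admissible \<sigma> H S k c x0 g \<longleftrightarrow>
     g \<in> borel_measurable borel \<and>
     (\<forall>x\<in>sparse_set S. integrable (obs_meas \<sigma> H x) g \<and> bias \<sigma> H k g x = c x) \<and>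
     integrable (obs_meas \<sigma> H x0) (\<lambda>y. (g y - expect \<sigma> H x0 g)\<^sup>2)"

definition valid_at ::
  "real \<Rightarrow> real^'n^'m \<Rightarrow> nat \<Rightarrow> 'n \<Rightarrow> (real^'n \<Rightarrow> real) \<Rightarrow> real^'n \<Rightarrow> bool" where
  "valid_at \<sigma> H S k c x0 \<longleftrightarrow> (\<exists>g. admissible \<sigma> H S k c x0 g)"

definition min_var ::
  "real \<Rightarrow> real^'n^'m \<Rightarrow> nat \<Rightarrow> 'n \<Rightarrow> (real^'n \<Rightarrow> real) \<Rightarrow> real^'n \<Rightarrow> real" where
  "min_var \<sigma> H S k c x0 = Inf {var \<sigma> H g x0 | g. admissible \<sigma> H S k c x0 g}"

definition lsc_on :: "'a::metric_space set \<Rightarrow> ('a \<Rightarrow> real) \<Rightarrow> bool" where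
  "lsc_on A f \<longleftrightarrow>
     (\<forall>x0\<in>A. \<forall>e>0. \<exists>d>0. \<forall>x\<in>A. dist x x0 < d \<longrightarrow> f x0 - e < f x)"

end

theory Submission
  imports Defs
begin


definition L2 :: "'a measure \<Rightarrow> ('a \<Rightarrow> real) \<Rightarrow> bool" where
  "L2 M f \<longleftrightarrow> f \<in> borel_measurable M \<and> integrable M (\<lambda>x. (f x)\<^sup>2)"

definition ip :: "'a measure \<Rightarrow> ('a \<Rightarrow> real) \<Rightarrow> ('a \<Rightarrow> real) \<Rightarrow> real" where
  "ip M f g = (\<integral>x. f x * g x \<partial>M)"

lemma L2_mult_integrable:
  assumes "L2 M f" "L2 M g" shows "integrable M (\<lambda>x. f x * g x)"
proof -
  have [measurable]: "f \<in> borel_measurable M" "g \<in> borel_measurable M" using assms by (auto simp: L2_def)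
  have "integrable M (\<lambda>x. (f x)\<^sup>2 + (g x)\<^sup>2)" using assms by (auto simp: L2_def)
  then show ?thesis
  proof (rule Bochner_Integration.integrable_bound)
    show "AE x in M. norm (f x * g x) \<le> norm ((f x)\<^sup>2 + (g x)\<^sup>2)"
    proof (rule AE_I2)
      fix x
      have "0 \<le> (\<bar>f x\<bar> - \<bar>g x\<bar>)\<^sup>2" by simp
      then have h1: "2 * (\<bar>f x\<bar> * \<bar>g x\<bar>) \<le> (f x)\<^sup>2 + (g x)\<^sup>2"
        by (simp add: power2_eq_square algebra_simps)
      have "0 \<le> \<bar>f x\<bar> * \<bar>g x\<bar>" by simp
      with h1 have "\<bar>f x\<bar> * \<bar>g x\<bar> \<le> (f x)\<^sup>2 + (g x)\<^sup>2" by linarith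
      then show "norm (f x * g x) \<le> norm ((f x)\<^sup>2 + (g x)\<^sup>2)"
        by (simp add: abs_mult)
    qed
  qed measurable
qed

lemma L2_add: assumes "L2 M f" "L2 M g" shows "L2 M (\<lambda>x. f x + g x)"
proof -
  have "integrable M (\<lambda>x. (f x)\<^sup>2 + (g x)\<^sup>2 + 2 * (f x * g x))"
    using assms L2_mult_integrable[OF assms] by (auto simp: L2_def)
  moreover have "(\<lambda>x. (f x)\<^sup>2 + (g x)\<^sup>2 + 2 * (f x * g x)) = (\<lambda>x. (f x + g x)\<^sup>2)"
    by (auto simp: power2_eq_square algebra_simps)
  ultimately show ?thesis using assms by (auto simp: L2_def)
qed

lemma L2_scale: assumes "L2 M f" shows "L2 M (\<lambda>x. c * f x)"
proof -
  have "integrable M (\<lambda>x. c\<^sup>2 * (f x)\<^sup>2)" using assms by (auto simp: L2_def)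
  then show ?thesis using assms by (auto simp: L2_def power_mult_distrib)
qed

lemma L2_uminus: assumes "L2 M f" shows "L2 M (\<lambda>x. - f x)"
  using L2_scale[OF assms, of "-1"] by simp

lemma L2_diff: assumes "L2 M f" "L2 M g" shows "L2 M (\<lambda>x. f x - g x)"
  using L2_add[OF assms(1) L2_uminus[OF assms(2)]] by simp

lemma L2_sum: assumes "\<And>i. i \<in> F \<Longrightarrow> L2 M (f i)" shows "L2 M (\<lambda>x. \<Sum>i\<in>F. f i x)"
  using assms
proof (induction F rule: infinite_finite_induct)
  case (infinite A) then show ?case by (simp add: L2_def)
next
  case empty then show ?case by (simp add: L2_def)
next
  case (insert a A) then show ?case by (simp add: L2_add)
qed

lemma ip_sym: "ip M f g = ip M g f" by (simp add: ip_def mult.commute)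

lemma ip_add_left: assumes "L2 M f" "L2 M g" "L2 M h"
  shows "ip M (\<lambda>x. f x + g x) h = ip M f h + ip M g h"
  unfolding ip_def using L2_mult_integrable[OF assms(1,3)] L2_mult_integrable[OF assms(2,3)]
  by (simp add: distrib_right)

lemma ip_scale_left: "ip M (\<lambda>x. c * f x) h = c * ip M f h"
  unfolding ip_def by (simp add: mult.assoc)

lemma ip_diff_left: assumes "L2 M f" "L2 M g" "L2 M h"
  shows "ip M (\<lambda>x. f x - g x) h = ip M f h - ip M g h"
  unfolding ip_def using L2_mult_integrable[OF assms(1,3)] L2_mult_integrable[OF assms(2,3)]
  by (simp add: left_diff_distrib)

lemma ip_add_right: assumes "L2 M f" "L2 M g" "L2 M h"
  shows "ip M h (\<lambda>x. f x + g x) = ip M h f + ip M h g"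
  using ip_add_left[OF assms] by (simp add: ip_sym)

lemma ip_diff_right: assumes "L2 M f" "L2 M g" "L2 M h"
  shows "ip M h (\<lambda>x. f x - g x) = ip M h f - ip M h g"
  using ip_diff_left[OF assms] by (simp add: ip_sym)

lemma ip_scale_right: "ip M h (\<lambda>x. c * f x) = c * ip M h f"
  using ip_scale_left by (metis ip_sym)

lemma ip_self_nonneg: "ip M f f \<ge> 0"
  unfolding ip_def by simp

lemma ip_sum_left: assumes "\<And>i. i \<in> F \<Longrightarrow> L2 M (f i)" "L2 M h"
  shows "ip M (\<lambda>x. \<Sum>i\<in>F. f i x) h = (\<Sum>i\<in>F. ip M (f i) h)"
  unfolding ip_def using assms
  by (simp add: sum_distrib_right integral_sum L2_mult_integrable)

lemma ip_sum_right: assumes "\<And>i. i \<in> F \<Longrightarrow> L2 M (f i)" "L2 M h"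
  shows "ip M h (\<lambda>x. \<Sum>i\<in>F. f i x) = (\<Sum>i\<in>F. ip M h (f i))"
  using ip_sum_left[OF assms] by (simp add: ip_sym)

lemma discr:
  fixes a D Z :: real
  assumes A: "\<And>t. 0 \<le> a + 2 * t * D + t\<^sup>2 * Z" and Z0: "Z \<ge> 0"
  shows "D\<^sup>2 \<le> a * Z"
proof (cases "Z = 0")
  case True
  have "D = 0"
  proof (rule ccontr)
    assume "D \<noteq> 0"
    have "0 \<le> a + 2 * (-(\<bar>a\<bar> + 1) / D) * D" using A[of "-(\<bar>a\<bar>+1)/D"] True by simp
    also have "\<dots> = a - 2 * (\<bar>a\<bar> + 1)" using \<open>D \<noteq> 0\<close> by (simp add: field_simps)
    finally show False by (cases "a \<ge> 0") auto
  qed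
  then show ?thesis using True by simp
next
  case False
  have a0: "0 \<le> a" using A[of 0] by simp
  have "0 \<le> a + 2 * (- D / Z) * D + (- D / Z)\<^sup>2 * Z" by (rule A)
  also have "\<dots> = a - D\<^sup>2 / Z" using False by (simp add: field_simps power2_eq_square)
  finally have "D\<^sup>2 / Z \<le> a" by simp
  then show ?thesis using False Z0 by (simp add: field_simps)
qed

lemma ip_CS: assumes "L2 M f" "L2 M g" shows "(ip M f g)\<^sup>2 \<le> ip M f f * ip M g g"
proof (rule discr)
  fix t
  have L: "L2 M (\<lambda>x. t * g x)" using assms L2_scale by blast
  have "0 \<le> ip M (\<lambda>x. f x + t * g x) (\<lambda>x. f x + t * g x)" by (rule ip_self_nonneg)
  also have "\<dots> = ip M f f + 2 * t * ip M f g + t\<^sup>2 * ip M g g"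
    using assms L L2_add[OF assms(1) L]
    by (simp add: ip_add_left ip_add_right ip_scale_left ip_scale_right ip_sym power2_eq_square algebra_simps)
  finally show "0 \<le> ip M f f + 2 * t * ip M f g + t\<^sup>2 * ip M g g" .
qed (rule ip_self_nonneg)

lemma ip_self_expand_diff: assumes "L2 M f" "L2 M g"
  shows "ip M (\<lambda>x. f x - g x) (\<lambda>x. f x - g x) = ip M f f - 2 * ip M f g + ip M g g"
  using assms L2_diff[OF assms]
  by (simp add: ip_diff_left ip_diff_right ip_sym algebra_simps)

lemma L2_const: assumes "finite_measure M" shows "L2 M (\<lambda>x. c)"
proof -
  interpret finite_measure M by fact
  show ?thesis by (simp add: L2_def)
qed

lemma L2_abs: assumes "L2 M f" shows "L2 M (\<lambda>x. \<bar>f x\<bar>)"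
proof -
  have [measurable]: "f \<in> borel_measurable M" using assms by (simp add: L2_def)
  show ?thesis using assms by (simp add: L2_def)
qed

lemma L1_bound: assumes "prob_space M" "L2 M f"
  shows "(\<integral>x. \<bar>f x\<bar> \<partial>M) \<le> sqrt (ip M f f)"
proof -
  interpret prob_space M by fact
  have "(ip M (\<lambda>x. \<bar>f x\<bar>) (\<lambda>x. 1))\<^sup>2 \<le> ip M (\<lambda>x. \<bar>f x\<bar>) (\<lambda>x. \<bar>f x\<bar>) * ip M (\<lambda>x. 1) (\<lambda>x. 1)"
    by (rule ip_CS[OF L2_abs[OF assms(2)] L2_const]) (simp add: finite_measure_axioms)
  also have "\<dots> = ip M f f" by (simp add: ip_def prob_space abs_mult_self_eq)
  finally have "(\<integral>x. \<bar>f x\<bar> \<partial>M)\<^sup>2 \<le> ip M f f" by (simp add: ip_def)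
  then show ?thesis by (simp add: real_le_rsqrt)
qed

lemma sq_le_eps_zero:
  fixes r C :: real
  assumes "\<And>n::nat. r \<le> C * ((1/4)^n / 8)"
  shows "r \<le> 0"
proof -
  have "(\<lambda>n::nat. C * ((1/4)^n / 8)) \<longlonglongrightarrow> C * (0 / 8)"
    by (intro tendsto_intros LIMSEQ_power_zero) auto
  then have "r \<le> C * (0 / 8)" by (rule LIMSEQ_le_const) (use assms in blast)
  then show ?thesis by simp
qed


lemma hilbert_main:
  assumes ps: "prob_space M"
    and VL2: "\<And>v. v \<in> V \<Longrightarrow> L2 M v" and V0: "(\<lambda>x. 0) \<in> V"
    and Vadd: "\<And>v w. v \<in> V \<Longrightarrow> w \<in> V \<Longrightarrow> (\<lambda>x. v x + w x) \<in> V"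
    and Vsc: "\<And>v c. v \<in> V \<Longrightarrow> (\<lambda>x. c * v x) \<in> V"
    and g0: "L2 M g0"
  shows "\<exists>u. L2 M u \<and> (\<forall>v\<in>V. ip M u v = ip M g0 v) \<and>
             (\<forall>e>0. \<exists>v\<in>V. ip M u u < 2 * ip M g0 v - ip M v v + e)"
proof -
  interpret prob_space M by fact
  define F where "F v = 2 * ip M g0 v - ip M v v" for v
  have Fle: "F v \<le> ip M g0 g0" if "v \<in> V" for v
  proof -
    have "0 \<le> ip M (\<lambda>x. g0 x - v x) (\<lambda>x. g0 x - v x)" by (rule ip_self_nonneg)
    then show ?thesis using ip_self_expand_diff[OF g0 VL2[OF that]] by (simp add: F_def)
  qed
  define B where "B = Sup (F ` V)"
  have bdd: "bdd_above (F ` V)" using Fle by (auto intro!: bdd_aboveI)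
  have FB: "F v \<le> B" if "v \<in> V" for v unfolding B_def using bdd that by (auto intro: cSup_upper)
  define eps :: "nat \<Rightarrow> real" where "eps n = (1/4)^n / 8" for n
  have eps_pos: "eps n > 0" for n by (simp add: eps_def)
  have eps_mono: "eps m \<le> eps n" if "n \<le> m" for m n
    unfolding eps_def using that by (intro divide_right_mono power_decreasing) auto
  have "\<exists>v\<in>V. B - eps n < F v" for n
  proof -
    have "B - eps n < Sup (F ` V)" using eps_pos[of n] by (simp add: B_def)
    then show ?thesis using V0 by (subst (asm) less_cSup_iff) (auto simp: bdd)
  qed
  then obtain vs where vsV: "\<And>n. vs n \<in> V" and vsB: "\<And>n. B - eps n < F (vs n)"
    by metis
  have vsL: "L2 M (vs n)" for n using VL2 vsV by blast
  \<comment> \<open>parallelogram\<close>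
  have par: "ip M (\<lambda>x. v x - w x) (\<lambda>x. v x - w x) \<le> 2 * (2 * B - F v - F w)"
    if v: "v \<in> V" and w: "w \<in> V" for v w
  proof -
    define h :: real where "h = 1/2"
    define mid where "mid = (\<lambda>x. h * (v x + w x))"
    have midV: "mid \<in> V" unfolding mid_def using Vadd Vsc v w by blast
    have Lv: "L2 M v" and Lw: "L2 M w" using VL2 v w by auto
    have Lvw: "L2 M (\<lambda>x. v x + w x)" using L2_add[OF Lv Lw] .
    have "F mid \<le> B" using FB midV .
    moreover have "ip M g0 mid = h * (ip M g0 v + ip M g0 w)"
      unfolding mid_def using Lv Lw Lvw g0 by (simp add: ip_scale_right ip_add_right)
    moreover have "ip M mid mid = h * h * (ip M v v + 2 * ip M v w + ip M w w)"
      unfolding mid_def using Lv Lw Lvw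
      by (simp only: ip_scale_right ip_scale_left)
         (simp add: ip_add_right ip_add_left ip_sym algebra_simps)
    moreover have "ip M (\<lambda>x. v x - w x) (\<lambda>x. v x - w x) = ip M v v - 2 * ip M v w + ip M w w"
      by (rule ip_self_expand_diff[OF Lv Lw])
    ultimately have "2 * (ip M g0 v + ip M g0 w) / 2 - (ip M v v + 2 * ip M v w + ip M w w) / 4 \<le> B"
      and "ip M (\<lambda>x. v x - w x) (\<lambda>x. v x - w x) = ip M v v - 2 * ip M v w + ip M w w"
      by (auto simp: F_def h_def)
    then show ?thesis unfolding F_def by (simp add: field_simps)
  qed
  have orth: "(ip M g0 z - ip M (vs n) z)\<^sup>2 \<le> eps n * ip M z z" if z: "z \<in> V" for z n
  proof -
    have Lz: "L2 M z" using VL2 z by auto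
    have "(- (ip M g0 z - ip M (vs n) z))\<^sup>2 \<le> (B - F (vs n)) * ip M z z"
    proof (rule discr)
      fix t
      have V': "(\<lambda>x. vs n x + t * z x) \<in> V" using Vadd Vsc vsV z by blast
      have Ltz: "L2 M (\<lambda>x. t * z x)" using L2_scale[OF Lz] .
      have "F (\<lambda>x. vs n x + t * z x) \<le> B" using FB V' .
      moreover have "F (\<lambda>x. vs n x + t * z x) = F (vs n) + 2 * t * (ip M g0 z - ip M (vs n) z) - t\<^sup>2 * ip M z z"
        using vsL[of n] Lz Ltz g0 L2_add[OF vsL[of n] Ltz]
        by (simp add: F_def ip_add_left ip_add_right ip_scale_left ip_scale_right ip_sym power2_eq_square algebra_simps)
      ultimately show "0 \<le> B - F (vs n) + 2 * t * - (ip M g0 z - ip M (vs n) z) + t\<^sup>2 * ip M z z"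
        by (simp add: algebra_simps)
    qed (rule ip_self_nonneg)
    also have "\<dots> \<le> eps n * ip M z z"
      using vsB[of n] by (intro mult_right_mono ip_self_nonneg) auto
    finally show ?thesis by (simp add: power2_commute)
  qed
  have cauchy: "ip M (\<lambda>x. vs m x - vs n x) (\<lambda>x. vs m x - vs n x) \<le> 4 * eps n" if "n \<le> m" for m n
  proof -
    have "ip M (\<lambda>x. vs m x - vs n x) (\<lambda>x. vs m x - vs n x) \<le> 2 * (2 * B - F (vs m) - F (vs n))"
      by (rule par[OF vsV vsV])
    also have "\<dots> \<le> 2 * (eps m + eps n)" using vsB[of m] vsB[of n] by simp
    also have "\<dots> \<le> 4 * eps n" using eps_mono[OF that] by simp
    finally show ?thesis .
  qed
  define d where "d k = (\<lambda>x. vs (Suc k) x - vs k x)" for k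
  have dL: "L2 M (d k)" for k unfolding d_def using L2_diff vsL by blast
  have dmeas[measurable]: "d k \<in> borel_measurable M" for k using dL by (simp add: L2_def)
  have vsmeas[measurable]: "vs k \<in> borel_measurable M" for k using vsL by (simp add: L2_def)
  have dint: "(\<integral>x. \<bar>d k x\<bar> \<partial>M) \<le> (1/2)^k" for k
  proof -
    have "(\<integral>x. \<bar>d k x\<bar> \<partial>M) \<le> sqrt (ip M (d k) (d k))" by (rule L1_bound[OF ps dL])
    also have "\<dots> \<le> sqrt (((1/2)^k)\<^sup>2)"
    proof (rule real_sqrt_le_mono)
      have "ip M (d k) (d k) \<le> 4 * eps k" unfolding d_def by (rule cauchy) simp
      also have "\<dots> \<le> ((1/2)^k)\<^sup>2"
      proof -
        have "((1/2::real)^k)\<^sup>2 = (1/4)^k" unfolding power2_eq_square power_mult_distrib[symmetric] by simp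
        then show ?thesis by (simp add: eps_def)
      qed
      finally show "ip M (d k) (d k) \<le> ((1/2)^k)\<^sup>2" .
    qed
    also have "\<dots> = (1/2)^k" by simp
    finally show ?thesis .
  qed
  have dintg: "integrable M (d k)" for k
    using square_integrable_imp_integrable[OF dmeas[of k]] dL[of k] unfolding L2_def by blast
  have "(\<integral>\<^sup>+x. (\<Sum>k. ennreal \<bar>d k x\<bar>) \<partial>M) = (\<Sum>k. \<integral>\<^sup>+x. ennreal \<bar>d k x\<bar> \<partial>M)"
    by (rule nn_integral_suminf) measurable
  also have "\<dots> = (\<Sum>k. ennreal (\<integral>x. \<bar>d k x\<bar> \<partial>M))"
    using dintg by (subst nn_integral_eq_integral) auto
  also have "\<dots> \<le> (\<Sum>k. ennreal ((1/2)^k))"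
    using dint by (intro suminf_le) (auto intro: ennreal_leI)
  also have "\<dots> = ennreal (\<Sum>k. (1/2::real)^k)"
    by (rule suminf_ennreal2) (auto intro: summable_geometric)
  finally have fin: "(\<integral>\<^sup>+x. (\<Sum>k. ennreal \<bar>d k x\<bar>) \<partial>M) \<noteq> \<top>"
    using top_neq_ennreal by (metis ennreal_less_top le_less_trans less_irrefl top.not_eq_extremum)
  have "AE x in M. (\<Sum>k. ennreal \<bar>d k x\<bar>) \<noteq> \<infinity>"
    by (rule nn_integral_PInf_AE) (measurable, use fin in simp)
  then have conv: "AE x in M. convergent (\<lambda>n. vs n x)"
  proof (rule AE_mp, intro AE_I2 impI)
    fix x assume "(\<Sum>k. ennreal \<bar>d k x\<bar>) \<noteq> \<infinity>"
    then have "summable (\<lambda>k. \<bar>d k x\<bar>)" by (intro summable_suminf_not_top) auto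
    then have "summable (\<lambda>k. d k x)" by (rule summable_rabs_cancel)
    then have "(\<lambda>n. \<Sum>k<n. d k x) \<longlonglongrightarrow> suminf (\<lambda>k. d k x)" by (rule summable_LIMSEQ)
    moreover have "(\<Sum>k<n. d k x) = vs n x - vs 0 x" for n
      unfolding d_def using sum_lessThan_telescope[of "\<lambda>k. vs k x" n] by simp
    ultimately have "(\<lambda>n. vs n x - vs 0 x) \<longlonglongrightarrow> suminf (\<lambda>k. d k x)" by simp
    then have "(\<lambda>n. (vs n x - vs 0 x) + vs 0 x) \<longlonglongrightarrow> suminf (\<lambda>k. d k x) + vs 0 x"
      by (intro tendsto_add tendsto_const)
    then show "convergent (\<lambda>n. vs n x)" by (auto simp: convergent_def)
  qed
  define u where "u x = lim (\<lambda>n. vs n x)" for x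
  have uconv: "AE x in M. (\<lambda>n. vs n x) \<longlonglongrightarrow> u x"
    using conv by eventually_elim (simp add: u_def convergent_LIMSEQ_iff)
  have umeas[measurable]: "u \<in> borel_measurable M" unfolding u_def by measurable
  have fatou: "(\<integral>\<^sup>+x. ennreal ((u x - vs n x)\<^sup>2) \<partial>M) \<le> ennreal (4 * eps n)" for n
  proof -
    have "(\<integral>\<^sup>+x. ennreal ((u x - vs n x)\<^sup>2) \<partial>M) =
          (\<integral>\<^sup>+x. liminf (\<lambda>m. ennreal ((vs m x - vs n x)\<^sup>2)) \<partial>M)"
    proof (rule nn_integral_cong_AE)
      show "AE x in M. ennreal ((u x - vs n x)\<^sup>2) = liminf (\<lambda>m. ennreal ((vs m x - vs n x)\<^sup>2))"
        using uconv
      proof eventually_elim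
        case (elim x)
        have "(\<lambda>m. ennreal ((vs m x - vs n x)\<^sup>2)) \<longlonglongrightarrow> ennreal ((u x - vs n x)\<^sup>2)"
          by (intro tendsto_intros elim)
        then show ?case by (intro lim_imp_Liminf[symmetric]) auto
      qed
    qed
    also have "\<dots> \<le> liminf (\<lambda>m. \<integral>\<^sup>+x. ennreal ((vs m x - vs n x)\<^sup>2) \<partial>M)"
      by (rule nn_integral_liminf) measurable
    also have "\<dots> \<le> ennreal (4 * eps n)"
    proof (rule Liminf_le)
      show "\<forall>\<^sub>F m in sequentially. (\<integral>\<^sup>+x. ennreal ((vs m x - vs n x)\<^sup>2) \<partial>M) \<le> ennreal (4 * eps n)"
        unfolding eventually_sequentially
      proof (intro exI allI impI)
        fix m assume "n \<le> m"
        have Ld: "L2 M (\<lambda>x. vs m x - vs n x)" using L2_diff vsL by blast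
        have "(\<integral>\<^sup>+x. ennreal ((vs m x - vs n x)\<^sup>2) \<partial>M) = ennreal (\<integral>x. (vs m x - vs n x)\<^sup>2 \<partial>M)"
          using Ld by (intro nn_integral_eq_integral) (auto simp: L2_def)
        also have "(\<integral>x. (vs m x - vs n x)\<^sup>2 \<partial>M) = ip M (\<lambda>x. vs m x - vs n x) (\<lambda>x. vs m x - vs n x)"
          by (simp add: ip_def power2_eq_square)
        also have "\<dots> \<le> 4 * eps n" by (rule cauchy) fact
        finally show "(\<integral>\<^sup>+x. ennreal ((vs m x - vs n x)\<^sup>2) \<partial>M) \<le> ennreal (4 * eps n)"
          by (simp add: ennreal_leI)
      qed
    qed simp
    finally show ?thesis .
  qed
  have udL: "L2 M (\<lambda>x. u x - vs n x)" for n
  proof -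
    have "integrable M (\<lambda>x. (u x - vs n x)\<^sup>2)"
      using fatou[of n] by (intro integrableI_nonneg) (auto simp: le_less_trans[OF _ ennreal_less_top])
    then show ?thesis by (simp add: L2_def)
  qed
  have udip: "ip M (\<lambda>x. u x - vs n x) (\<lambda>x. u x - vs n x) \<le> 4 * eps n" for n
  proof -
    have "(\<integral>x. (u x - vs n x)\<^sup>2 \<partial>M) \<le> 4 * eps n"
      using fatou[of n] eps_pos[of n] by (intro integral_real_bounded) auto
    then show ?thesis by (simp add: ip_def power2_eq_square)
  qed
  have uL: "L2 M u"
    using L2_add[OF udL[of 0] vsL[of 0]] by simp
  have uorth: "ip M u z = ip M g0 z" if z: "z \<in> V" for z
  proof -
    have Lz: "L2 M z" using VL2 z by auto
    have "(ip M u z - ip M g0 z)\<^sup>2 \<le> (10 * ip M z z) * ((1/4)^n / 8)" for n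
    proof -
      have "(ip M u z - ip M (vs n) z)\<^sup>2 = (ip M (\<lambda>x. u x - vs n x) z)\<^sup>2"
        using uL vsL Lz by (simp add: ip_diff_left)
      also have "\<dots> \<le> ip M (\<lambda>x. u x - vs n x) (\<lambda>x. u x - vs n x) * ip M z z"
        by (rule ip_CS[OF udL Lz])
      also have "\<dots> \<le> 4 * eps n * ip M z z"
        by (intro mult_right_mono udip ip_self_nonneg)
      finally have A: "(ip M u z - ip M (vs n) z)\<^sup>2 \<le> 4 * eps n * ip M z z" .
      have B: "(ip M g0 z - ip M (vs n) z)\<^sup>2 \<le> eps n * ip M z z" by (rule orth[OF z])
      have "(ip M u z - ip M g0 z)\<^sup>2 \<le> 2 * (ip M u z - ip M (vs n) z)\<^sup>2 + 2 * (ip M g0 z - ip M (vs n) z)\<^sup>2"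
      proof -
        have "0 \<le> (ip M u z + ip M g0 z - 2 * ip M (vs n) z)\<^sup>2" by simp
        then show ?thesis by (simp add: power2_eq_square algebra_simps)
      qed
      also have "\<dots> \<le> 10 * eps n * ip M z z" using A B by simp
      finally show ?thesis by (simp add: eps_def mult_ac)
    qed
    then have "(ip M u z - ip M g0 z)\<^sup>2 \<le> 0" by (rule sq_le_eps_zero)
    then show ?thesis by simp
  qed
  have "\<forall>e>0. \<exists>v\<in>V. ip M u u < 2 * ip M g0 v - ip M v v + e"
  proof (intro allI impI)
    fix e :: real assume e: "e > 0"
    have "(\<lambda>n. 4 * eps n) \<longlonglongrightarrow> 4 * (0 / 8)"
      unfolding eps_def by (intro tendsto_intros LIMSEQ_power_zero) auto
    then have "\<forall>\<^sub>F n in sequentially. 4 * eps n < e" using e by (simp add: order_tendsto_iff)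
    then obtain n where n: "4 * eps n < e" by (auto simp: eventually_sequentially)
    have "ip M (\<lambda>x. u x - vs n x) (\<lambda>x. u x - vs n x) = ip M u u - 2 * ip M u (vs n) + ip M (vs n) (vs n)"
      by (rule ip_self_expand_diff[OF uL vsL])
    moreover have "ip M u (vs n) = ip M g0 (vs n)" using uorth vsV by blast
    ultimately have "ip M u u = 2 * ip M g0 (vs n) - ip M (vs n) (vs n) + ip M (\<lambda>x. u x - vs n x) (\<lambda>x. u x - vs n x)"
      by simp
    also have "\<dots> < 2 * ip M g0 (vs n) - ip M (vs n) (vs n) + e" using udip[of n] n by simp
    finally show "\<exists>v\<in>V. ip M u u < 2 * ip M g0 v - ip M v v + e" using vsV by blast
  qed
  then show ?thesis using uL uorth by blast
qed


lemma nn_integral_lborel_shift: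
  fixes f :: "'a::euclidean_space \<Rightarrow> ennreal"
  assumes [measurable]: "f \<in> borel_measurable borel"
  shows "(\<integral>\<^sup>+y. f (y - m) \<partial>lborel) = (\<integral>\<^sup>+y. f y \<partial>lborel)"
proof -
  have "(\<integral>\<^sup>+y. f (y - m) \<partial>lborel) = (\<integral>\<^sup>+y. f (y - m) \<partial>(distr lborel borel ((+) m)))"
    by (simp add: lborel_distr_plus)
  also have "\<dots> = (\<integral>\<^sup>+y. f (m + y - m) \<partial>lborel)"
    by (subst nn_integral_distr) auto
  finally show ?thesis by simp
qed

lemma normal_nn_integral: "\<sigma> > 0 \<Longrightarrow> (\<integral>\<^sup>+t. ennreal (normal_density 0 \<sigma> t) \<partial>lborel) = 1"
  by (subst nn_integral_eq_integral) (auto simp: normal_density_nonneg)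

lemma gauss_dens_prod:
  fixes H :: "real^'n^'m"
  shows "gauss_dens \<sigma> H x y = (\<Prod>b\<in>(Basis::(real^'m) set). normal_density 0 \<sigma> ((y - H *v x) \<bullet> b))"
proof -
  define C where "C = 2 * pi * \<sigma>\<^sup>2"
  have cardB: "card (Basis :: (real^'m) set) = CARD('m)"
    using DIM_cart[where 'a=real and 'b='m] by simp
  have "(\<Prod>b\<in>(Basis::(real^'m) set). C powr (-1/2)) = (C powr (-1/2)) ^ CARD('m)"
    by (simp add: cardB)
  also have "\<dots> = C powr (- real CARD('m) / 2)"
  proof (cases "C = 0")
    case True then show ?thesis by simp
  next
    case False
    then have "C > 0" unfolding C_def by (simp add: zero_less_power2 order_le_neq_trans)
    then show ?thesis
      by (simp add: powr_realpow[symmetric] powr_powr)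
  qed
  finally have pw: "C powr (- real CARD('m) / 2) = (\<Prod>b\<in>(Basis::(real^'m) set). C powr (-1/2))" ..
  have ex: "exp (- (norm z)\<^sup>2 / (2 * \<sigma>\<^sup>2)) = (\<Prod>b\<in>(Basis::(real^'m) set). exp (- (z \<bullet> b)\<^sup>2 / (2 * \<sigma>\<^sup>2)))"
    for z :: "real^'m"
  proof -
    have "(norm z)\<^sup>2 = (\<Sum>b\<in>(Basis::(real^'m) set). (z \<bullet> b)\<^sup>2)"
        unfolding power2_norm_eq_inner by (subst euclidean_inner) (simp add: power2_eq_square)
    then show ?thesis
      by (simp add: exp_sum[symmetric] sum_divide_distrib[symmetric] sum_negf)
  qed
  have nd: "normal_density 0 \<sigma> t = C powr (-1/2) * exp (- t\<^sup>2 / (2 * \<sigma>\<^sup>2))" for t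
    by (simp add: normal_density_def C_def powr_minus_divide powr_half_sqrt)
  show ?thesis
    unfolding gauss_dens_def nd prod.distrib ex[symmetric] using pw by (simp add: C_def)
qed

lemma gauss_dens_nonneg: "gauss_dens \<sigma> H x y \<ge> 0"
  by (simp add: gauss_dens_def)

lemma gauss_dens_pos: "\<sigma> \<noteq> 0 \<Longrightarrow> gauss_dens \<sigma> H x y > 0"
  by (simp add: gauss_dens_def)

lemma gauss_dens_measurable[measurable]: "gauss_dens \<sigma> H x \<in> borel_measurable borel"
  unfolding gauss_dens_def by measurable

lemma gauss_nn_integral:
  fixes H :: "real^'n^'m"
  assumes "\<sigma> > 0"
  shows "(\<integral>\<^sup>+y. ennreal (gauss_dens \<sigma> H x y) \<partial>lborel) = 1"
proof -
  define F where "F z = ennreal (\<Prod>b\<in>(Basis::(real^'m) set). normal_density 0 \<sigma> (z \<bullet> b))" for z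
  have [measurable]: "F \<in> borel_measurable borel" unfolding F_def normal_density_def by measurable
  have "(\<integral>\<^sup>+y. ennreal (gauss_dens \<sigma> H x y) \<partial>lborel) = (\<integral>\<^sup>+y. F (y - H *v x) \<partial>lborel)"
    by (simp add: gauss_dens_prod F_def)
  also have "\<dots> = (\<integral>\<^sup>+y. F y \<partial>lborel)" by (rule nn_integral_lborel_shift) measurable
  also have "\<dots> = (\<integral>\<^sup>+y. (\<Prod>b\<in>(Basis::(real^'m) set). ennreal (normal_density 0 \<sigma> (y \<bullet> b))) \<partial>lborel)"
    unfolding F_def by (subst prod_ennreal) (auto simp: normal_density_nonneg)
  also have "\<dots> = (\<Prod>b\<in>(Basis::(real^'m) set). (\<integral>\<^sup>+t. ennreal (normal_density 0 \<sigma> t) \<partial>lborel))"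
    by (rule nn_integral_lborel_prod) (auto simp: normal_density_def)
  also have "\<dots> = 1" by (simp add: normal_nn_integral assms)
  finally show ?thesis .
qed

lemma prob_space_obs: "\<sigma> > 0 \<Longrightarrow> prob_space (obs_meas \<sigma> H x)"
  unfolding obs_meas_def
  by (rule prob_spaceI) (simp add: emeasure_density gauss_nn_integral)


definition rho :: "real \<Rightarrow> real^'n^'m \<Rightarrow> real^'n \<Rightarrow> real^'n \<Rightarrow> real^'m \<Rightarrow> real" where
  "rho \<sigma> H x0 s y = gauss_dens \<sigma> H s y / gauss_dens \<sigma> H x0 y"

definition Kf :: "real \<Rightarrow> real^'n^'m \<Rightarrow> real^'n \<Rightarrow> real^'n \<Rightarrow> real^'n \<Rightarrow> real" where
  "Kf \<sigma> H x0 s t = exp (((H *v (s - x0)) \<bullet> (H *v (t - x0))) / \<sigma>\<^sup>2)"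

lemma rho_measurable[measurable]: "rho \<sigma> H x0 s \<in> borel_measurable borel"
  unfolding rho_def by measurable

lemma rho_nonneg: "rho \<sigma> H x0 s y \<ge> 0"
  unfolding rho_def by (simp add: gauss_dens_nonneg)

lemma norm_id:
  fixes y a b c :: "'a::real_inner"
  shows "- (norm (y - a))\<^sup>2 - (norm (y - b))\<^sup>2 + (norm (y - c))\<^sup>2
         = 2 * ((a - c) \<bullet> (b - c)) - (norm (y - (a + b - c)))\<^sup>2"
  unfolding power2_norm_eq_inner by (simp add: inner_simps inner_commute algebra_simps)

lemma rho_prod_id:
  fixes H :: "real^'n^'m"
  assumes "\<sigma> \<noteq> 0"
  shows "gauss_dens \<sigma> H x0 y * (rho \<sigma> H x0 s y * rho \<sigma> H x0 t y)
         = Kf \<sigma> H x0 s t * gauss_dens \<sigma> H (s + t - x0) y"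
proof -
  define C where "C = (2 * pi * \<sigma>\<^sup>2) powr (- real CARD('m) / 2)"
  have C: "C > 0" unfolding C_def using assms by simp
  define E where "E z = - (norm (y - H *v z))\<^sup>2 / (2 * \<sigma>\<^sup>2)" for z
  have g: "gauss_dens \<sigma> H z y = C * exp (E z)" for z unfolding gauss_dens_def C_def E_def ..
  have "gauss_dens \<sigma> H x0 y * (rho \<sigma> H x0 s y * rho \<sigma> H x0 t y) = C * exp (E s + E t - E x0)"
    unfolding rho_def g using C by (simp add: exp_add exp_diff field_simps)
  also have "E s + E t - E x0 = ((H *v (s - x0)) \<bullet> (H *v (t - x0))) / \<sigma>\<^sup>2 + E (s + t - x0)"
  proof -
    have "- (norm (y - H *v s))\<^sup>2 - (norm (y - H *v t))\<^sup>2 + (norm (y - H *v x0))\<^sup>2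
         = 2 * ((H *v s - H *v x0) \<bullet> (H *v t - H *v x0)) - (norm (y - (H *v s + H *v t - H *v x0)))\<^sup>2"
      by (rule norm_id)
    then show ?thesis using assms unfolding E_def
      by (simp add: matrix_vector_mult_diff_distrib matrix_vector_right_distrib field_simps)
  qed
  finally show ?thesis by (simp add: Kf_def g exp_add)
qed

lemma gauss_integrable:
  fixes H :: "real^'n^'m"
  assumes "\<sigma> > 0"
  shows "integrable lborel (gauss_dens \<sigma> H x)" and "(\<integral>y. gauss_dens \<sigma> H x y \<partial>lborel) = 1"
proof -
  show i: "integrable lborel (gauss_dens \<sigma> H x)"
    by (rule integrableI_nonneg) (auto simp: gauss_dens_nonneg gauss_nn_integral assms)
  have "(\<integral>\<^sup>+y. ennreal (gauss_dens \<sigma> H x y) \<partial>lborel) = ennreal (\<integral>y. gauss_dens \<sigma> H x y \<partial>lborel)"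
    using i by (intro nn_integral_eq_integral) (auto simp: gauss_dens_nonneg)
  then show "(\<integral>y. gauss_dens \<sigma> H x y \<partial>lborel) = 1"
    using gauss_nn_integral[OF assms, of H x] by simp
qed


lemma obs_density:
  assumes "\<sigma> \<noteq> 0"
  shows "obs_meas \<sigma> H s = density (obs_meas \<sigma> H x0) (\<lambda>y. ennreal (rho \<sigma> H x0 s y))"
proof -
  have "density (obs_meas \<sigma> H x0) (\<lambda>y. ennreal (rho \<sigma> H x0 s y)) =
        density lborel (\<lambda>y. ennreal (gauss_dens \<sigma> H x0 y) * ennreal (rho \<sigma> H x0 s y))"
    unfolding obs_meas_def by (rule density_density_eq) auto
  also have "(\<lambda>y. ennreal (gauss_dens \<sigma> H x0 y) * ennreal (rho \<sigma> H x0 s y)) = (\<lambda>y. ennreal (gauss_dens \<sigma> H s y))"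
  proof
    fix y
    have "gauss_dens \<sigma> H x0 y \<noteq> 0" using gauss_dens_pos[OF assms, of H x0 y] by simp
    then show "ennreal (gauss_dens \<sigma> H x0 y) * ennreal (rho \<sigma> H x0 s y) = ennreal (gauss_dens \<sigma> H s y)"
      by (simp add: ennreal_mult'[symmetric] rho_def gauss_dens_nonneg)
  qed
  finally show ?thesis by (simp add: obs_meas_def)
qed


lemma measurable_obs[simp]: "g \<in> borel_measurable (obs_meas \<sigma> H x) \<longleftrightarrow> g \<in> borel_measurable borel"
  unfolding obs_meas_def by simp

lemma obs_integrable_iff:
  assumes "\<sigma> \<noteq> 0" "g \<in> borel_measurable borel"
  shows "integrable (obs_meas \<sigma> H s) g \<longleftrightarrow> integrable (obs_meas \<sigma> H x0) (\<lambda>y. rho \<sigma> H x0 s y * g y)"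
  unfolding obs_density[OF assms(1), of H s x0]
  using assms by (subst integrable_density) (auto simp: rho_nonneg)

lemma obs_expect:
  assumes "\<sigma> \<noteq> 0" "g \<in> borel_measurable borel"
  shows "expect \<sigma> H s g = (\<integral>y. rho \<sigma> H x0 s y * g y \<partial>obs_meas \<sigma> H x0)"
  unfolding expect_def obs_density[OF assms(1), of H s x0]
  using assms by (subst integral_density) (auto simp: rho_nonneg)


lemma rho_ip:
  fixes H :: "real^'n^'m"
  assumes "\<sigma> > 0"
  shows "integrable (obs_meas \<sigma> H x0) (\<lambda>y. rho \<sigma> H x0 s y * rho \<sigma> H x0 t y)"
    and "ip (obs_meas \<sigma> H x0) (rho \<sigma> H x0 s) (rho \<sigma> H x0 t) = Kf \<sigma> H x0 s t"
proof -
  have eq: "(\<lambda>y. gauss_dens \<sigma> H x0 y * (rho \<sigma> H x0 s y * rho \<sigma> H x0 t y))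
          = (\<lambda>y. Kf \<sigma> H x0 s t * gauss_dens \<sigma> H (s + t - x0) y)"
    using rho_prod_id[of \<sigma> H x0 _ s t] assms by simp
  have i: "integrable lborel (\<lambda>y. Kf \<sigma> H x0 s t * gauss_dens \<sigma> H (s + t - x0) y)"
    using gauss_integrable(1)[OF assms] by (rule integrable_mult_right)
  show "integrable (obs_meas \<sigma> H x0) (\<lambda>y. rho \<sigma> H x0 s y * rho \<sigma> H x0 t y)"
    unfolding obs_meas_def by (subst integrable_density) (auto simp: gauss_dens_nonneg eq gauss_integrable(1)[OF assms])
  have "ip (obs_meas \<sigma> H x0) (rho \<sigma> H x0 s) (rho \<sigma> H x0 t)
        = (\<integral>y. gauss_dens \<sigma> H x0 y * (rho \<sigma> H x0 s y * rho \<sigma> H x0 t y) \<partial>lborel)"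
    unfolding ip_def obs_meas_def by (subst integral_density) (auto simp: gauss_dens_nonneg)
  also have "\<dots> = Kf \<sigma> H x0 s t * (\<integral>y. gauss_dens \<sigma> H (s + t - x0) y \<partial>lborel)"
    unfolding eq by simp
  also have "\<dots> = Kf \<sigma> H x0 s t" using gauss_integrable(2)[OF assms, of H "s + t - x0"] by simp
  finally show "ip (obs_meas \<sigma> H x0) (rho \<sigma> H x0 s) (rho \<sigma> H x0 t) = Kf \<sigma> H x0 s t" .
qed

lemma rho_L2:
  fixes H :: "real^'n^'m"
  assumes "\<sigma> > 0"
  shows "L2 (obs_meas \<sigma> H x0) (rho \<sigma> H x0 s)"
  using rho_ip(1)[OF assms, of H x0 s s] by (simp add: L2_def power2_eq_square)

definition gam :: "(real^'n \<Rightarrow> real) \<Rightarrow> 'n \<Rightarrow> real^'n \<Rightarrow> real" where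
  "gam c k s = c s + s $ k"

lemma adm_imp:
  fixes H :: "real^'n^'m"
  assumes s0: "\<sigma> > 0" and x: "x \<in> sparse_set S" and adm: "admissible \<sigma> H S k c x g"
  shows "L2 (obs_meas \<sigma> H x) g" and "\<And>s. s \<in> sparse_set S \<Longrightarrow> ip (obs_meas \<sigma> H x) g (rho \<sigma> H x s) = gam c k s"
proof -
  interpret prob_space "obs_meas \<sigma> H x" by (rule prob_space_obs[OF s0])
  have gm[measurable]: "g \<in> borel_measurable borel" using adm by (simp add: admissible_def)
  have gi: "integrable (obs_meas \<sigma> H x) g" using adm x by (simp add: admissible_def)
  define m where "m = expect \<sigma> H x g"
  have sq: "integrable (obs_meas \<sigma> H x) (\<lambda>y. (g y - m)\<^sup>2)" using adm by (simp add: admissible_def m_def)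
  have "integrable (obs_meas \<sigma> H x) (\<lambda>y. (g y - m)\<^sup>2 + 2 * m * g y - m\<^sup>2)"
    using sq gi by auto
  also have "(\<lambda>y. (g y - m)\<^sup>2 + 2 * m * g y - m\<^sup>2) = (\<lambda>y. (g y)\<^sup>2)"
    by (auto simp: power2_eq_square algebra_simps)
  finally show L: "L2 (obs_meas \<sigma> H x) g" by (simp add: L2_def)
  fix s :: "real^'n" assume s: "s \<in> sparse_set S"
  have "ip (obs_meas \<sigma> H x) g (rho \<sigma> H x s) = (\<integral>y. rho \<sigma> H x s y * g y \<partial>obs_meas \<sigma> H x)"
    by (simp add: ip_def mult.commute)
  also have "\<dots> = expect \<sigma> H s g" using obs_expect[of \<sigma> g H s x] s0 by simp
  also have "\<dots> = gam c k s"
  proof -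
    have "bias \<sigma> H k g s = c s" using adm s by (simp add: admissible_def)
    then show ?thesis by (simp add: bias_def gam_def)
  qed
  finally show "ip (obs_meas \<sigma> H x) g (rho \<sigma> H x s) = gam c k s" .
qed

lemma imp_adm:
  fixes H :: "real^'n^'m"
  assumes s0: "\<sigma> > 0" and x: "x \<in> sparse_set S" and L: "L2 (obs_meas \<sigma> H x) u"
    and ipu: "\<And>s. s \<in> sparse_set S \<Longrightarrow> ip (obs_meas \<sigma> H x) u (rho \<sigma> H x s) = gam c k s"
  shows "admissible \<sigma> H S k c x u"
proof -
  interpret prob_space "obs_meas \<sigma> H x" by (rule prob_space_obs[OF s0])
  have um[measurable]: "u \<in> borel_measurable borel" using L by (simp add: L2_def)
  have A: "integrable (obs_meas \<sigma> H s) u \<and> bias \<sigma> H k u s = c s" if s: "s \<in> sparse_set S" for s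
  proof
    have "integrable (obs_meas \<sigma> H x) (\<lambda>y. rho \<sigma> H x s y * u y)"
      by (rule L2_mult_integrable[OF rho_L2[OF s0] L])
    then show "integrable (obs_meas \<sigma> H s) u" using obs_integrable_iff[of \<sigma> u H s x] s0 by simp
    have "expect \<sigma> H s u = (\<integral>y. rho \<sigma> H x s y * u y \<partial>obs_meas \<sigma> H x)"
      using obs_expect[of \<sigma> u H s x] s0 by simp
    also have "\<dots> = ip (obs_meas \<sigma> H x) u (rho \<sigma> H x s)" by (simp add: ip_def mult.commute)
    finally show "bias \<sigma> H k u s = c s" using ipu[OF s] by (simp add: bias_def gam_def)
  qed
  have "L2 (obs_meas \<sigma> H x) (\<lambda>y. u y - expect \<sigma> H x u)"
    by (rule L2_diff[OF L L2_const]) (rule finite_measure_axioms)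
  then have "integrable (obs_meas \<sigma> H x) (\<lambda>y. (u y - expect \<sigma> H x u)\<^sup>2)" by (simp add: L2_def)
  then show ?thesis using A um by (simp add: admissible_def)
qed

lemma var_eq:
  fixes H :: "real^'n^'m"
  assumes s0: "\<sigma> > 0" and x: "x \<in> sparse_set S" and adm: "admissible \<sigma> H S k c x g"
  shows "var \<sigma> H g x = ip (obs_meas \<sigma> H x) g g - (gam c k x)\<^sup>2"
proof -
  interpret prob_space "obs_meas \<sigma> H x" by (rule prob_space_obs[OF s0])
  have L: "L2 (obs_meas \<sigma> H x) g" by (rule adm_imp(1)[OF s0 x adm])
  have gi: "integrable (obs_meas \<sigma> H x) g" using adm x by (simp add: admissible_def)
  have gg: "integrable (obs_meas \<sigma> H x) (\<lambda>y. g y * g y)" using L by (simp add: L2_def power2_eq_square)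
  define m where "m = expect \<sigma> H x g"
  have "bias \<sigma> H k g x = c x" using adm x by (simp add: admissible_def)
  then have m: "m = gam c k x" by (simp add: bias_def gam_def m_def)
  have "var \<sigma> H g x = (\<integral>y. g y * g y - 2 * m * g y + m * m \<partial>obs_meas \<sigma> H x)"
    unfolding var_def expect_def m_def[unfolded expect_def, symmetric]
    by (rule Bochner_Integration.integral_cong) (auto simp: power2_eq_square algebra_simps)
  also have "\<dots> = (\<integral>y. g y * g y \<partial>obs_meas \<sigma> H x) - 2 * m * (\<integral>y. g y \<partial>obs_meas \<sigma> H x) + m * m"
    using gi gg by (simp add: prob_space)
  also have "(\<integral>y. g y \<partial>obs_meas \<sigma> H x) = m" by (simp add: m_def expect_def)
  finally show ?thesis by (simp add: ip_def m power2_eq_square)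
qed


definition Phi :: "real \<Rightarrow> real^'n^'m \<Rightarrow> (real^'n \<Rightarrow> real) \<Rightarrow> 'n \<Rightarrow> (real^'n) set \<Rightarrow> (real^'n \<Rightarrow> real) \<Rightarrow> real^'n \<Rightarrow> real" where
  "Phi \<sigma> H c k F a x = 2 * (\<Sum>s\<in>F. a s * gam c k s) - (\<Sum>s\<in>F. \<Sum>t\<in>F. a s * a t * Kf \<sigma> H x s t)"

lemma comb_L2:
  fixes H :: "real^'n^'m"
  assumes "\<sigma> > 0"
  shows "L2 (obs_meas \<sigma> H x) (\<lambda>y. \<Sum>s\<in>F. a s * rho \<sigma> H x s y)"
  by (rule L2_sum) (rule L2_scale[OF rho_L2[OF assms]])

lemma comb_ip_self:
  fixes H :: "real^'n^'m"
  assumes "\<sigma> > 0"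
  shows "ip (obs_meas \<sigma> H x) (\<lambda>y. \<Sum>s\<in>F. a s * rho \<sigma> H x s y) (\<lambda>y. \<Sum>s\<in>F. a s * rho \<sigma> H x s y)
       = (\<Sum>s\<in>F. \<Sum>t\<in>F. a s * a t * Kf \<sigma> H x s t)"
proof -
  have L: "L2 (obs_meas \<sigma> H x) (\<lambda>y. a s * rho \<sigma> H x s y)" for s
    by (rule L2_scale[OF rho_L2[OF assms]])
  have "ip (obs_meas \<sigma> H x) (\<lambda>y. \<Sum>s\<in>F. a s * rho \<sigma> H x s y) (\<lambda>y. \<Sum>t\<in>F. a t * rho \<sigma> H x t y)
      = (\<Sum>s\<in>F. ip (obs_meas \<sigma> H x) (\<lambda>y. a s * rho \<sigma> H x s y) (\<lambda>y. \<Sum>t\<in>F. a t * rho \<sigma> H x t y))"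
    by (rule ip_sum_left[OF L comb_L2[OF assms]])
  also have "\<dots> = (\<Sum>s\<in>F. \<Sum>t\<in>F. ip (obs_meas \<sigma> H x) (\<lambda>y. a s * rho \<sigma> H x s y) (\<lambda>y. a t * rho \<sigma> H x t y))"
    by (intro sum.cong refl ip_sum_right L)
  also have "\<dots> = (\<Sum>s\<in>F. \<Sum>t\<in>F. a s * a t * Kf \<sigma> H x s t)"
    by (simp add: ip_scale_left ip_scale_right rho_ip(2)[OF assms] mult.assoc)
  finally show ?thesis .
qed

lemma comb_ip_adm:
  fixes H :: "real^'n^'m"
  assumes s0: "\<sigma> > 0" and x: "x \<in> sparse_set S" and adm: "admissible \<sigma> H S k c x g"
    and F: "F \<subseteq> sparse_set S"
  shows "ip (obs_meas \<sigma> H x) g (\<lambda>y. \<Sum>s\<in>F. a s * rho \<sigma> H x s y) = (\<Sum>s\<in>F. a s * gam c k s)"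
proof -
  have L: "L2 (obs_meas \<sigma> H x) (\<lambda>y. a s * rho \<sigma> H x s y)" for s
    by (rule L2_scale[OF rho_L2[OF s0]])
  have "ip (obs_meas \<sigma> H x) g (\<lambda>y. \<Sum>s\<in>F. a s * rho \<sigma> H x s y)
       = (\<Sum>s\<in>F. ip (obs_meas \<sigma> H x) g (\<lambda>y. a s * rho \<sigma> H x s y))"
    by (rule ip_sum_right[OF L adm_imp(1)[OF s0 x adm]])
  also have "\<dots> = (\<Sum>s\<in>F. a s * gam c k s)"
    using F by (intro sum.cong refl) (auto simp: ip_scale_right adm_imp(2)[OF s0 x adm])
  finally show ?thesis .
qed

lemma lower_bound:
  fixes H :: "real^'n^'m"
  assumes s0: "\<sigma> > 0" and x: "x \<in> sparse_set S" and adm: "admissible \<sigma> H S k c x g"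
    and F: "F \<subseteq> sparse_set S"
  shows "Phi \<sigma> H c k F a x \<le> ip (obs_meas \<sigma> H x) g g"
proof -
  define v where "v = (\<lambda>y. \<Sum>s\<in>F. a s * rho \<sigma> H x s y)"
  have "0 \<le> ip (obs_meas \<sigma> H x) (\<lambda>y. g y - v y) (\<lambda>y. g y - v y)" by (rule ip_self_nonneg)
  also have "\<dots> = ip (obs_meas \<sigma> H x) g g - 2 * ip (obs_meas \<sigma> H x) g v + ip (obs_meas \<sigma> H x) v v"
    by (rule ip_self_expand_diff[OF adm_imp(1)[OF s0 x adm]]) (simp add: v_def comb_L2[OF s0])
  finally show ?thesis
    using comb_ip_adm[OF s0 x adm F, of a] comb_ip_self[OF s0, where H=H and x=x and F=F and a=a]
    by (simp add: Phi_def v_def)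
qed

lemma var_nonneg: "var \<sigma> H g x \<ge> 0"
  unfolding var_def expect_def by simp

lemma minvar_lower:
  fixes H :: "real^'n^'m"
  assumes s0: "\<sigma> > 0" and x: "x \<in> sparse_set S" and val: "valid_at \<sigma> H S k c x"
    and F: "F \<subseteq> sparse_set S"
  shows "Phi \<sigma> H c k F a x - (gam c k x)\<^sup>2 \<le> min_var \<sigma> H S k c x"
  unfolding min_var_def
proof (rule cInf_greatest)
  show "{var \<sigma> H g x |g. admissible \<sigma> H S k c x g} \<noteq> {}" using val by (auto simp: valid_at_def)
  fix r assume "r \<in> {var \<sigma> H g x |g. admissible \<sigma> H S k c x g}"
  then obtain g where adm: "admissible \<sigma> H S k c x g" and r: "r = var \<sigma> H g x" by auto
  show "Phi \<sigma> H c k F a x - (gam c k x)\<^sup>2 \<le> r"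
    using lower_bound[OF s0 x adm F, of a] var_eq[OF s0 x adm] r by simp
qed

lemma minvar_upper:
  fixes H :: "real^'n^'m"
  assumes s0: "\<sigma> > 0" and adm: "admissible \<sigma> H S k c x g"
  shows "min_var \<sigma> H S k c x \<le> var \<sigma> H g x"
  unfolding min_var_def
  by (rule cInf_lower) (use adm var_nonneg in \<open>auto intro!: bdd_belowI[where m=0]\<close>)

lemma cont_Phi:
  fixes H :: "real^'n^'m"
  shows "continuous_on A (Phi \<sigma> H c k F a)"
proof -
  have mv: "continuous_on A (\<lambda>x. H *v (s - x))" for s :: "real^'n"
    by (rule continuous_on_compose2[OF matrix_vector_mult_linear_continuous_on[of UNIV H]])
       (auto intro!: continuous_intros)
  show ?thesis
    unfolding Phi_def[abs_def] Kf_def divide_inverse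
    by (intro continuous_intros mv)
qed


lemma sum_if_union:
  assumes "finite F" "finite G"
  shows "(\<Sum>s\<in>F \<union> G. (if s \<in> F then f s else 0)) = (\<Sum>s\<in>F. f s)"
proof -
  have "(\<Sum>s\<in>F \<union> G. (if s \<in> F then f s else 0)) = (\<Sum>s\<in>(F \<union> G) \<inter> F. f s)"
    by (rule sum.inter_restrict[symmetric]) (use assms in auto)
  also have "(F \<union> G) \<inter> F = F" by auto
  finally show ?thesis .
qed

theorem corollary2:
  fixes H :: "real^'n^'m" and \<sigma> :: real and S :: nat and k :: 'n
    and c :: "real^'n \<Rightarrow> real"
  assumes "1 \<le> S" and "S \<le> CARD('n)"
    and "spark H > enat S"
    and "\<sigma> > 0"
    and "\<forall>x0\<in>sparse_set S. valid_at \<sigma> H S k c x0"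
    and "continuous_on (sparse_set S) c"
  shows "lsc_on (sparse_set S) (min_var \<sigma> H S k c)"
  unfolding lsc_on_def
proof (intro ballI allI impI)
  note s0 = assms(4) and valid = assms(5) and ccont = assms(6)
  fix x0 :: "real^'n" and e :: real
  assume x0: "x0 \<in> sparse_set S" and e: "0 < e"
  let ?X = "sparse_set S"
  let ?\<mu> = "obs_meas \<sigma> H x0"
  obtain g0 where adm0: "admissible \<sigma> H S k c x0 g0" using valid x0 by (auto simp: valid_at_def)
  have g0L: "L2 ?\<mu> g0" by (rule adm_imp(1)[OF s0 x0 adm0])
  define V where "V = {v. \<exists>F a. finite F \<and> F \<subseteq> ?X \<and> v = (\<lambda>y. \<Sum>s\<in>F. a s * rho \<sigma> H x0 s y)}"
  have VL2: "L2 ?\<mu> v" if "v \<in> V" for v using that comb_L2[OF s0] by (auto simp: V_def)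
  have V0: "(\<lambda>y. 0) \<in> V" unfolding V_def by (rule CollectI, rule exI[of _ "{}"]) auto
  have Vsc: "(\<lambda>y. r * v y) \<in> V" if vin: "v \<in> V" for v r
  proof -
    obtain F a where F: "finite F" "F \<subseteq> ?X" and v: "v = (\<lambda>y. \<Sum>s\<in>F. a s * rho \<sigma> H x0 s y)"
      using vin unfolding V_def by auto
    have "(\<lambda>y. r * v y) = (\<lambda>y. \<Sum>s\<in>F. (r * a s) * rho \<sigma> H x0 s y)"
      by (simp add: v sum_distrib_left mult.assoc)
    then show ?thesis using F unfolding V_def
      by (intro CollectI exI[of _ F] exI[of _ "\<lambda>s. r * a s"]) simp
  qed
  have Vadd: "(\<lambda>y. v y + w y) \<in> V" if vin: "v \<in> V" and win: "w \<in> V" for v w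
  proof -
    obtain F a where F: "finite F" "F \<subseteq> ?X" and v: "v = (\<lambda>y. \<Sum>s\<in>F. a s * rho \<sigma> H x0 s y)"
      using vin unfolding V_def by auto
    obtain G b where G: "finite G" "G \<subseteq> ?X" and w: "w = (\<lambda>y. \<Sum>s\<in>G. b s * rho \<sigma> H x0 s y)"
      using win unfolding V_def by auto
    define a' where "a' s = (if s \<in> F then a s else 0) + (if s \<in> G then b s else 0)" for s
    have "(\<lambda>y. v y + w y) = (\<lambda>y. \<Sum>s\<in>F \<union> G. a' s * rho \<sigma> H x0 s y)"
    proof
      fix y
      have "(\<Sum>s\<in>F \<union> G. a' s * rho \<sigma> H x0 s y)
          = (\<Sum>s\<in>F \<union> G. (if s \<in> F then a s * rho \<sigma> H x0 s y else 0))
            + (\<Sum>s\<in>F \<union> G. (if s \<in> G then b s * rho \<sigma> H x0 s y else 0))"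
        unfolding sum.distrib[symmetric] by (intro sum.cong refl) (simp add: a'_def distrib_right)
      also have "\<dots> = v y + w y"
        using sum_if_union[OF F(1) G(1), of "\<lambda>s. a s * rho \<sigma> H x0 s y"]
          sum_if_union[OF G(1) F(1), of "\<lambda>s. b s * rho \<sigma> H x0 s y"]
        by (simp add: v w Un_commute)
      finally show "v y + w y = (\<Sum>s\<in>F \<union> G. a' s * rho \<sigma> H x0 s y)" ..
    qed
    then show ?thesis using F G unfolding V_def
      by (intro CollectI exI[of _ "F \<union> G"] exI[of _ a']) simp
  qed
  obtain u where uL: "L2 ?\<mu> u" and uorth: "\<forall>v\<in>V. ip ?\<mu> u v = ip ?\<mu> g0 v"
    and uapp: "\<forall>e>0. \<exists>v\<in>V. ip ?\<mu> u u < 2 * ip ?\<mu> g0 v - ip ?\<mu> v v + e"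
    using hilbert_main[OF prob_space_obs[OF s0] VL2 V0 Vadd Vsc g0L] by blast
  obtain v where vV: "v \<in> V" and vapp: "ip ?\<mu> u u < 2 * ip ?\<mu> g0 v - ip ?\<mu> v v + e / 2"
    using uapp e by (meson half_gt_zero)
  obtain F a where F: "finite F" "F \<subseteq> ?X" and v: "v = (\<lambda>y. \<Sum>s\<in>F. a s * rho \<sigma> H x0 s y)"
    using vV unfolding V_def by auto
  have Phi0: "2 * ip ?\<mu> g0 v - ip ?\<mu> v v = Phi \<sigma> H c k F a x0"
    unfolding v Phi_def using comb_ip_adm[OF s0 x0 adm0 F(2)] comb_ip_self[OF s0, where H=H and x=x0 and F=F and a=a]
    by simp
  have rhoV: "rho \<sigma> H x0 s \<in> V" if "s \<in> ?X" for s
  proof -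
    have "rho \<sigma> H x0 s = (\<lambda>y. \<Sum>s'\<in>{s}. 1 * rho \<sigma> H x0 s' y)" by simp
    then show ?thesis using that unfolding V_def
      by (intro CollectI exI[of _ "{s}"] exI[of _ "\<lambda>_. 1"]) simp
  qed
  have uadm: "admissible \<sigma> H S k c x0 u"
  proof (rule imp_adm[OF s0 x0 uL])
    fix s :: "real^'n" assume s: "s \<in> ?X"
    have "ip ?\<mu> u (rho \<sigma> H x0 s) = ip ?\<mu> g0 (rho \<sigma> H x0 s)" using uorth rhoV[OF s] by blast
    also have "\<dots> = gam c k s" by (rule adm_imp(2)[OF s0 x0 adm0 s])
    finally show "ip ?\<mu> u (rho \<sigma> H x0 s) = gam c k s" .
  qed
  define h where "h x = Phi \<sigma> H c k F a x - (gam c k x)\<^sup>2" for x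
  have M0: "min_var \<sigma> H S k c x0 < h x0 + e / 2"
  proof -
    have "min_var \<sigma> H S k c x0 \<le> var \<sigma> H u x0" by (rule minvar_upper[OF s0 uadm])
    also have "\<dots> = ip ?\<mu> u u - (gam c k x0)\<^sup>2" by (rule var_eq[OF s0 x0 uadm])
    also have "\<dots> < h x0 + e / 2" using vapp Phi0 by (simp add: h_def)
    finally show ?thesis .
  qed
  have gcont: "continuous_on ?X (gam c k)"
    unfolding gam_def[abs_def]
    by (intro continuous_on_add ccont linear_continuous_on bounded_linear_vec_nth)
  have hcont: "continuous_on ?X h"
    unfolding h_def[abs_def] by (intro continuous_intros cont_Phi gcont)
  obtain d where d: "d > 0" and dh: "\<forall>x\<in>?X. dist x x0 < d \<longrightarrow> dist (h x) (h x0) < e / 2"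
    using hcont x0 e unfolding continuous_on_iff by (meson half_gt_zero)
  show "\<exists>d>0. \<forall>x\<in>?X. dist x x0 < d \<longrightarrow> min_var \<sigma> H S k c x0 - e < min_var \<sigma> H S k c x"
  proof (intro exI conjI ballI impI)
    fix x assume x: "x \<in> ?X" and dx: "dist x x0 < d"
    have "h x \<le> min_var \<sigma> H S k c x"
      unfolding h_def by (rule minvar_lower[OF s0 x _ F(2)]) (use valid x in blast)
    moreover have "h x0 - e / 2 < h x"
    proof -
      have "dist (h x) (h x0) < e / 2" using dh x dx by blast
      then show ?thesis unfolding dist_real_def by linarith
    qed
    ultimately show "min_var \<sigma> H S k c x0 - e < min_var \<sigma> H S k c x" using M0 by simp
  qed (rule d)
qed


end
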